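(* For every $a>0$ and $\alpha>0$, the first Robin eigenvalue of an interval $I_a$ of length $a$ satisfies \[ \frac{2\alpha\pi^2}{a(\pi^2+2\alpha a)}\le\lambda_1(I_a,\alpha)\le\frac{\pi^2}{a^2}\cdot\frac{\pi^2+2a\alpha-\sqrt{64a\alpha+(\pi^2-2a\alpha)^2}}{2(\pi^2-8)}. \]
   Context: For an interval $I_a\subset\mathbb{R}$ of length $a>0$ and $\alpha>0$, $\lambda_1(I_a,\alpha)<\lambda_2(I_a,\alpha)<\cdots$ denote the eigenvalues of the Robin problem $-u''=\lambda u$ on $I_a$ with $\partial_\nu u+\alpha u=0$ at both endpoints ($\partial_\nu$ the outward derivative). Equivalently, $\lambda_1(I_a,\alpha)$ is the unique root in $(0,\pi^2/a^2)$ of $\alpha=\sqrt\lambda\tan(a\sqrt\lambda/2)$. *)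

theory Defs
  imports "HOL-Analysis.Analysis"
begin

text \<open>Robin eigenvalue problem on the interval I_a = [0,a]:
  -u'' = lambda u on [0,a], with outward derivative condition
  d_nu u + alpha u = 0 at both endpoints, i.e.
  -u'(0) + alpha u(0) = 0 and u'(a) + alpha u(a) = 0.
  An eigenvalue is a real lambda admitting a nontrivial twice
  differentiable solution (u' and u'' given explicitly as functions, derivatives
  taken within the closed interval, i.e. one-sided at the endpoints).\<close>

definition robin_eigenvalue :: "real \<Rightarrow> real \<Rightarrow> real \<Rightarrow> bool" where
  "robin_eigenvalue a \<alpha> lam \<longleftrightarrow>
     (\<exists>(u::real \<Rightarrow> real) (u'::real \<Rightarrow> real).
        (\<forall>x\<in>{0..a}. (u has_real_derivative u' x) (at x within {0..a})) \<and>
        (\<forall>x\<in>{0..a}. (u' has_real_derivative (- lam * u x)) (at x within {0..a})) \<and>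
        (\<exists>x\<in>{0..a}. u x \<noteq> 0) \<and>
        - u' 0 + \<alpha> * u 0 = 0 \<and>
        u' a + \<alpha> * u a = 0)"

definition robin_lambda1 :: "real \<Rightarrow> real \<Rightarrow> real" where
  "robin_lambda1 a \<alpha> = Inf {lam. robin_eigenvalue a \<alpha> lam}"

end

theory Submission
  imports Defs
begin

lemma down_stays:
  fixes f f' :: "real \<Rightarrow> real"
  assumes "p \<le> x" "x \<le> y" "y \<le> q"
    and der: "\<And>z. p \<le> z \<Longrightarrow> z \<le> q \<Longrightarrow> (f has_real_derivative f' z) (at z)"
    and pat: "\<And>u v. p < u \<Longrightarrow> u < v \<Longrightarrow> v < q \<Longrightarrow> f' u < 0 \<Longrightarrow> f' v \<le> 0"
    and lt: "f x < f p"
  shows "f y \<le> f x"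
proof (cases "x = y")
  case True then show ?thesis by simp
next
  case False
  have px: "p < x" using lt assms(1) by (cases "p = x") auto
  obtain \<xi> where xi: "p < \<xi>" "\<xi> < x" "f x - f p = (x - p) * f' \<xi>"
    using MVT2[OF px, of f f'] der assms by auto
  have "(x - p) * f' \<xi> < 0" using xi lt by simp
  then have "f' \<xi> < 0" using px by (simp add: mult_less_0_iff)
  have xy: "x < y" using False assms by simp
  obtain \<eta> where eta: "x < \<eta>" "\<eta> < y" "f y - f x = (y - x) * f' \<eta>"
    using MVT2[OF xy, of f f'] der assms by auto
  have "f' \<eta> \<le> 0" using pat[of \<xi> \<eta>] xi eta \<open>f' \<xi> < 0\<close> assms by auto
  then have "(y - x) * f' \<eta> \<le> 0" using xy by (simp add: mult_nonneg_nonpos)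
  then show ?thesis using eta by simp
qed

lemma up_stays:
  fixes f f' :: "real \<Rightarrow> real"
  assumes "p \<le> x" "x \<le> y" "y \<le> q"
    and der: "\<And>z. p \<le> z \<Longrightarrow> z \<le> q \<Longrightarrow> (f has_real_derivative f' z) (at z)"
    and pat: "\<And>u v. p < u \<Longrightarrow> u < v \<Longrightarrow> v < q \<Longrightarrow> f' u > 0 \<Longrightarrow> f' v \<ge> 0"
    and lt: "f x > f p"
  shows "f y \<ge> f x"
proof -
  have "(\<lambda>z. - f z) y \<le> (\<lambda>z. - f z) x"
  proof (rule down_stays[where f = "\<lambda>z. - f z" and f' = "\<lambda>z. - f' z"])
    fix z assume "p \<le> z" "z \<le> q"
    then show "((\<lambda>z. - f z) has_real_derivative - f' z) (at z)"
      using der[of z] DERIV_minus by auto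
  next
    fix u v assume "p < u" "u < v" "v < q" "- f' u < 0"
    then show "- f' v \<le> 0" using pat[of u v] by auto
  qed (use assms in auto)
  then show ?thesis by simp
qed

lemma nonneg_between:
  fixes f f' :: "real \<Rightarrow> real"
  assumes "p \<le> x" "x \<le> q"
    and der: "\<And>z. p \<le> z \<Longrightarrow> z \<le> q \<Longrightarrow> (f has_real_derivative f' z) (at z)"
    and pat: "\<And>u v. p < u \<Longrightarrow> u < v \<Longrightarrow> v < q \<Longrightarrow> f' u < 0 \<Longrightarrow> f' v \<le> 0"
    and "f p \<ge> 0" "f q \<ge> 0"
  shows "f x \<ge> 0"
proof (rule ccontr)
  assume "\<not> f x \<ge> 0"
  then have "f x < f p" using assms by simp
  from down_stays[OF assms(1,2) order_refl der pat this] \<open>\<not> f x \<ge> 0\<close> assms(6)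
  show False by simp
qed


lemma pi_sq_bounds: "9.85 < pi^2" "pi^2 < 9.87"
proof -
  have a: "3.141592653588 \<le> pi" "pi \<le> 3.1415926535899" by (rule pi_approx)+
  have "(3.14::real)*3.14 \<le> pi*pi" by (rule mult_mono) (use a in auto)
  then show "9.85 < pi^2" by (simp add: power2_eq_square)
  have "pi*pi \<le> (3.1416::real)*3.1416" by (rule mult_mono) (use a in auto)
  then show "pi^2 < 9.87" by (simp add: power2_eq_square)
qed

lemma ineq_I:
  fixes t :: real
  assumes "0 \<le> t" "t \<le> pi/2"
  shows "(pi^2 - 4*t^2) * sin t \<le> pi^2 * t * cos t"
proof -
  define g where "g x = 4*x* cos x - (pi^2-8)* sin x" for x
  define g' where "g' x = (12-pi^2)* cos x - 4*x* sin x" for x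
  define F where "F x = pi^2 * x * cos x - (pi^2 - 4*x^2) * sin x" for x
  define F' where "F' x = x * g x" for x
  have dg: "(g has_real_derivative g' z) (at z)" for z
    unfolding g_def g'_def by (auto intro!: derivative_eq_intros simp: algebra_simps)
  have dF: "(F has_real_derivative F' z) (at z)" for z
    unfolding F_def F'_def g_def by (auto intro!: derivative_eq_intros simp: algebra_simps power2_eq_square)
  have pos12: "12 - pi^2 > 0" using pi_sq_bounds by simp
  have g'mono: "g' v \<le> g' u" if "0 \<le> u" "u \<le> v" "v \<le> pi/2" for u v
  proof -
    have "cos v \<le> cos u" using that by (intro cos_monotone_0_pi_le) auto
    moreover have "sin u \<le> sin v" using that by (intro sin_monotone_2pi_le) auto
    moreover have "0 \<le> sin u" using that by (intro sin_ge_zero) auto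
    ultimately have "u * sin u \<le> v * sin v" using that by (intro mult_mono) auto
    moreover have "(12-pi^2) * cos v \<le> (12-pi^2) * cos u"
      using \<open>cos v \<le> cos u\<close> pos12 by (intro mult_left_mono) auto
    ultimately show ?thesis unfolding g'_def by (simp add: mult.assoc)
  qed
  have gpat: "g y \<le> 0" if "0 < x" "x < y" "y < pi/2" "g x < 0" for x y
  proof -
    have "g y \<le> g x"
    proof (rule down_stays[where p=0 and q="pi/2" and f=g and f'=g'])
      fix u v assume "0 < u" "u < v" "v < pi/2" "g' u < 0"
      then show "g' v \<le> 0" using g'mono[of u v] by auto
    qed (use that dg in \<open>auto simp: g_def\<close>)
    then show ?thesis using that by simp
  qed
  have "F t \<ge> 0"
  proof (rule nonneg_between[where p=0 and q="pi/2" and f=F and f'=F'])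
    fix u v assume uv: "0 < u" "u < v" "v < pi/2" "F' u < 0"
    then have "g u < 0" unfolding F'_def by (simp add: mult_less_0_iff)
    then have "g v \<le> 0" using gpat[of u v] uv by auto
    then show "F' v \<le> 0" unfolding F'_def using uv by (simp add: mult_nonneg_nonpos)
  qed (use assms dF in \<open>auto simp: F_def power2_eq_square\<close>)
  then show ?thesis unfolding F_def by simp
qed


lemma ineq_II:
  fixes t :: real
  assumes t0: "0 \<le> t" and t1: "t \<le> pi/2"
  shows "cos t * (pi^2 * t - (4 * (pi^2 - 8) / pi^2) * t^3) \<le> sin t * (pi^2 - 4 * t^2)"
proof -
  define c where "c = 4 * (pi^2 - 8) / pi^2"
  define d where "d = 8 * (12 - pi^2) / pi^2"
  have pi2: "pi^2 > 9.85" "pi^2 < 9.87" using pi_sq_bounds by auto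
  have cpos: "c > 0" unfolding c_def using pi2 by simp
  have dc3: "d - 3 * c < 0"
  proof -
    have "d - 3 * c = (192 - 20 * pi^2) / pi^2" unfolding c_def d_def by (simp add: field_simps)
    also have "\<dots> < 0" using pi2 by (intro divide_neg_pos) auto
    finally show ?thesis .
  qed
  define m where "m x = (d - 3 * c) * cos x + 2 * c * x * sin x" for x
  define k where "k x = (d - 2 * c) * (sin x * cos x + x) - 2 * c * x * (cos x)^2" for x
  define k' where "k' x = 2 * cos x * m x" for x
  define h where "h x = (d - 2 * c) * x * tan x + c * (pi^2/4 - x^2) - d" for x
  define h' where "h' x = k x / (cos x)^2" for x
  define g where "g x = c * (pi^2/4 - x^2) * sin x - d * x * cos x" for x
  define g' where "g' x = (d - 2 * c) * x * sin x + (c * (pi^2/4 - x^2) - d) * cos x" for x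
  define G where "G x = sin x * (pi^2 - 4 * x^2) - cos x * (pi^2 * x - c * x^3)" for x
  define G' where "G' x = x * g x" for x
  have cos_pos: "cos x > 0" if "0 \<le> x" "x < pi/2" for x
    using that by (intro cos_gt_zero_pi) auto
  have cos_nn: "cos x \<ge> 0" if "0 \<le> x" "x \<le> pi/2" for x
    using that by (intro cos_ge_zero) auto
  have dk: "(k has_real_derivative k' z) (at z)" for z
  proof -
    have "(k has_real_derivative
       (d - 2 * c) * (cos z * cos z - sin z * sin z + 1) - 2 * c * (cos z)^2
         + 4 * c * z * cos z * sin z) (at z)"
      unfolding k_def
      by (rule derivative_eq_intros refl | simp)+
    moreover have "(d - 2 * c) * (cos z * cos z - sin z * sin z + 1) - 2 * c * (cos z)^2
         + 4 * c * z * cos z * sin z = k' z"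
    proof -
      have "cos z * cos z + sin z * sin z = 1" by (rule sin_cos_squared_add3)
      then have e: "cos z * cos z - sin z * sin z + 1 = 2 * (cos z * cos z)" by linarith
      show ?thesis unfolding k'_def m_def e by (simp add: algebra_simps power2_eq_square)
    qed
    ultimately show ?thesis by simp
  qed
  have dh: "(h has_real_derivative h' z) (at z)" if "cos z \<noteq> 0" for z
  proof -
    have "(h has_real_derivative
       (d - 2 * c) * (tan z + z * inverse ((cos z)^2)) - c * (2 * z)) (at z)"
      unfolding h_def using that
      by (auto intro!: derivative_eq_intros simp: algebra_simps)
    moreover have "(d - 2 * c) * (tan z + z * inverse ((cos z)^2)) - c * (2 * z) = h' z"
      unfolding h'_def k_def tan_def using that
      by (simp add: field_simps power2_eq_square)
    ultimately show ?thesis by simp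
  qed
  have dg: "(g has_real_derivative g' z) (at z)" for z
    unfolding g_def g'_def
    by (rule derivative_eq_intros refl | simp)+ (simp add: algebra_simps power2_eq_square)
  have dG: "(G has_real_derivative G' z) (at z)" for z
  proof -
    have "(G has_real_derivative
       cos z * (pi^2 - 4 * z^2) - sin z * (8 * z) + sin z * (pi^2 * z - c * z^3)
       - cos z * (pi^2 - c * (3 * z^2))) (at z)"
      unfolding G_def
      by (rule derivative_eq_intros refl | simp)+
    moreover have "cos z * (pi^2 - 4 * z^2) - sin z * (8 * z) + sin z * (pi^2 * z - c * z^3)
       - cos z * (pi^2 - c * (3 * z^2)) = G' z"
      unfolding G'_def g_def c_def d_def
      by (simp add: field_simps power2_eq_square power3_eq_cube)
    ultimately show ?thesis by simp
  qed
  have g'_eq: "g' x = cos x * h x" if "cos x \<noteq> 0" for x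
    unfolding g'_def h_def tan_def using that by (simp add: field_simps)
  have m_mono: "m u \<le> m v" if "0 \<le> u" "u \<le> v" "v \<le> pi/2" for u v
  proof -
    have "cos v \<le> cos u" using that by (intro cos_monotone_0_pi_le) auto
    moreover have "sin u \<le> sin v" using that by (intro sin_monotone_2pi_le) auto
    moreover have "0 \<le> sin u" using that by (intro sin_ge_zero) auto
    ultimately have "u * sin u \<le> v * sin v" using that by (intro mult_mono) auto
    then have "2 * c * (u * sin u) \<le> 2 * c * (v * sin v)" using cpos by simp
    moreover have "(d - 3 * c) * cos u \<le> (d - 3 * c) * cos v"
      using \<open>cos v \<le> cos u\<close> dc3 by (intro mult_left_mono_neg) auto
    ultimately show ?thesis unfolding m_def by (simp add: mult.assoc)
  qed
  have k_pat: "k y \<ge> k x" if "0 \<le> x" "x \<le> y" "y \<le> pi/2" "k x > 0" for x y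
  proof (rule up_stays[where p=0 and q="pi/2" and f=k and f'=k'])
    fix u v assume uv: "0 < u" "u < v" "v < pi/2" "k' u > 0"
    have "m u > 0"
    proof (rule ccontr)
      assume "\<not> m u > 0"
      then have "2 * cos u * m u \<le> 0" using cos_nn[of u] uv
        by (simp add: mult_nonneg_nonpos)
      then show False using uv unfolding k'_def by simp
    qed
    then have "m v > 0" using m_mono[of u v] uv by auto
    then show "k' v \<ge> 0" unfolding k'_def using cos_nn[of v] uv by simp
  qed (use that dk in \<open>auto simp: k_def\<close>)
  have h_quasi: "h x2 < 0" if "0 \<le> x1" "x1 < x2" "x2 < x3" "x3 < pi/2" "h x1 < 0" "h x3 < 0"
    for x1 x2 x3
  proof (rule ccontr)
    assume "\<not> h x2 < 0"
    then have "h x2 > h x1" using that by simp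
    have "h x3 \<ge> h x2"
    proof (rule up_stays[where p=x1 and q=x3 and f=h and f'=h'])
      fix z assume "x1 \<le> z" "z \<le> x3"
      then show "(h has_real_derivative h' z) (at z)"
        using dh cos_pos[of z] that by auto
    next
      fix u v assume uv: "x1 < u" "u < v" "v < x3" "h' u > 0"
      have cu: "cos u > 0" "cos v > 0" using cos_pos uv that by auto
      have "k u > 0" using uv(4) cu unfolding h'_def by (simp add: zero_less_divide_iff)
      then have "k v > 0" using k_pat[of u v] uv that by auto
      then show "h' v \<ge> 0" unfolding h'_def using cu by simp
    qed (use that \<open>h x2 > h x1\<close> in auto)
    then show False using \<open>\<not> h x2 < 0\<close> that by simp
  qed
  have g0: "g 0 = 0" unfolding g_def by simp
  have gpi: "g (pi/2) = 0" unfolding g_def by (simp add: power2_eq_square)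
  have g_pat: "g y \<le> 0" if "0 < x" "x < y" "y < pi/2" "g x < 0" for x y
  proof (rule ccontr)
    assume "\<not> g y \<le> 0"
    obtain \<xi>1 where x1: "0 < \<xi>1" "\<xi>1 < x" "g x - g 0 = (x - 0) * g' \<xi>1"
      using MVT2[OF \<open>0 < x\<close>, of g g'] dg by auto
    obtain \<xi>2 where x2: "x < \<xi>2" "\<xi>2 < y" "g y - g x = (y - x) * g' \<xi>2"
      using MVT2[OF \<open>x < y\<close>, of g g'] dg by auto
    obtain \<xi>3 where x3: "y < \<xi>3" "\<xi>3 < pi/2" "g (pi/2) - g y = (pi/2 - y) * g' \<xi>3"
      using MVT2[OF \<open>y < pi/2\<close>, of g g'] dg by auto
    have c1: "cos \<xi>1 > 0" "cos \<xi>2 > 0" "cos \<xi>3 > 0"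
      using cos_pos x1 x2 x3 that by auto
    have "x * g' \<xi>1 < 0" using x1 g0 that by simp
    then have "g' \<xi>1 < 0" using that by (simp add: mult_less_0_iff)
    then have h1: "h \<xi>1 < 0" using g'_eq[of \<xi>1] c1 by (simp add: mult_less_0_iff)
    have "(y - x) * g' \<xi>2 > 0" using x2 that \<open>\<not> g y \<le> 0\<close> by simp
    then have "g' \<xi>2 > 0" using that by (simp add: zero_less_mult_iff)
    then have h2: "h \<xi>2 > 0" using g'_eq[of \<xi>2] c1 by (simp add: zero_less_mult_iff)
    have "(pi/2 - y) * g' \<xi>3 < 0" using x3 gpi \<open>\<not> g y \<le> 0\<close> by simp
    then have "g' \<xi>3 < 0" using that by (simp add: mult_less_0_iff)
    then have h3: "h \<xi>3 < 0" using g'_eq[of \<xi>3] c1 by (simp add: mult_less_0_iff)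
    show False using h_quasi[of \<xi>1 \<xi>2 \<xi>3] h1 h2 h3 x1 x2 x3 by auto
  qed
  have "G t \<ge> 0"
  proof (rule nonneg_between[where p=0 and q="pi/2" and f=G and f'=G'])
    fix u v assume uv: "0 < u" "u < v" "v < pi/2" "G' u < 0"
    then have "g u < 0" unfolding G'_def by (simp add: mult_less_0_iff)
    then have "g v \<le> 0" using g_pat[of u v] uv by auto
    then show "G' v \<le> 0" unfolding G'_def using uv by (simp add: mult_nonneg_nonpos)
  next
    show "G (pi/2) \<ge> 0" unfolding G_def by (simp add: power2_eq_square)
  qed (use assms dG in \<open>auto simp: G_def\<close>)
  then show ?thesis unfolding G_def c_def by simp
qed


lemma mono_within:
  fixes f f' :: "real \<Rightarrow> real"
  assumes xy: "x \<le> y" and sub: "{x..y} \<subseteq> S"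
    and der: "\<And>z. z \<in> S \<Longrightarrow> (f has_real_derivative f' z) (at z within S)"
    and nn: "\<And>z. z \<in> S \<Longrightarrow> f' z \<ge> 0"
  shows "f x \<le> f y"
proof -
  have "\<exists>\<xi>\<in>{x..y}. f y - f x = (\<lambda>h. f' \<xi> * h) (y - x)"
  proof (rule mvt_very_simple[OF xy])
    fix z assume "x \<le> z" "z \<le> y"
    then have "z \<in> S" using sub by auto
    then have "(f has_real_derivative f' z) (at z within {x..y})"
      using der sub by (blast intro: DERIV_subset)
    then show "(f has_derivative (\<lambda>h. f' z * h)) (at z within {x..y})"
      by (simp add: has_field_derivative_def)
  qed
  then obtain \<xi> where "\<xi> \<in> {x..y}" "f y - f x = f' \<xi> * (y - x)" by auto
  moreover have "f' \<xi> \<ge> 0" using nn sub \<open>\<xi> \<in> {x..y}\<close> by auto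
  ultimately show ?thesis using xy by (smt (verit) mult_nonneg_nonneg)
qed

lemma eig_data:
  assumes a: "a > 0" and al: "\<alpha> > 0" and ev: "robin_eigenvalue a \<alpha> lam"
  shows "lam > 0 \<and> (let k = sqrt lam; s = sin (k * a / 2); c = cos (k * a / 2) in
           (\<alpha> * c - k * s) * (k * c + \<alpha> * s) = 0)"
proof -
  obtain u u' where du: "\<And>x. x \<in> {0..a} \<Longrightarrow> (u has_real_derivative u' x) (at x within {0..a})"
    and du': "\<And>x. x \<in> {0..a} \<Longrightarrow> (u' has_real_derivative (- lam * u x)) (at x within {0..a})"
    and nz: "\<exists>x\<in>{0..a}. u x \<noteq> 0"
    and b0: "- u' 0 + \<alpha> * u 0 = 0" and ba: "u' a + \<alpha> * u a = 0"
    using ev unfolding robin_eigenvalue_def by blast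
  have lpos: "lam > 0"
  proof (rule ccontr)
    assume "\<not> lam > 0"
    then have l0: "lam \<le> 0" by simp
    define w where "w x = u x * u' x" for x
    have dw: "(w has_real_derivative (u' x * u' x + u x * (- lam * u x))) (at x within {0..a})"
      if "x \<in> {0..a}" for x
      unfolding w_def using du[OF that] du'[OF that]
      by (auto intro!: derivative_eq_intros simp: algebra_simps)
    have dwn: "u' x * u' x + u x * (- lam * u x) \<ge> 0" for x
    proof -
      have "u x * (- lam * u x) = (- lam) * (u x * u x)" by simp
      also have "\<dots> \<ge> 0" using l0 mult_nonneg_nonneg[of "-lam" "u x * u x"] by simp
      finally show ?thesis using zero_le_square[of "u' x"] by linarith
    qed
    have wmono: "w x \<le> w y" if "0 \<le> x" "x \<le> y" "y \<le> a" for x y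
      by (rule mono_within[OF that(2), of "{0..a}" w "\<lambda>z. u' z * u' z + u z * (- lam * u z)"]) (use that dw dwn in auto)
    have "w 0 \<le> w a" using wmono[of 0 a] a by simp
    moreover have "w 0 = \<alpha> * (u 0)^2" "w a = - \<alpha> * (u a)^2"
    proof -
      have "u' a = - \<alpha> * u a" "u' 0 = \<alpha> * u 0" using ba b0 by linarith+
      then show "w 0 = \<alpha> * (u 0)^2" "w a = - \<alpha> * (u a)^2"
        unfolding w_def by (auto simp: power2_eq_square)
    qed
    ultimately have "\<alpha> * (u 0)^2 + \<alpha> * (u a)^2 \<le> 0" by simp
    moreover have "\<alpha> * (u 0)^2 \<ge> 0" "\<alpha> * (u a)^2 \<ge> 0" using al by auto
    ultimately have "\<alpha> * (u 0)^2 = 0" "\<alpha> * (u a)^2 = 0" by linarith+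
    then have u0: "u 0 = 0" and ua: "u a = 0" using al by auto
    have w0: "w x = 0" if "x \<in> {0..a}" for x
    proof -
      have "w 0 \<le> w x" "w x \<le> w a" using wmono that by auto
      moreover have "w 0 = 0" "w a = 0" unfolding w_def using u0 ua by auto
      ultimately show ?thesis by simp
    qed
    have "\<exists>C. \<forall>x\<in>{0..a}. (\<lambda>x. u x * u x) x = C"
    proof (rule has_field_derivative_zero_constant)
      fix x assume x: "x \<in> {0..a}"
      have "((\<lambda>x. u x * u x) has_real_derivative (u' x * u x + u x * u' x)) (at x within {0..a})"
        using du[OF x] by (auto intro!: derivative_eq_intros)
      moreover have "u' x * u x + u x * u' x = 0" using w0[OF x] unfolding w_def by auto
      ultimately show "((\<lambda>x. u x * u x) has_real_derivative 0) (at x within {0..a})" by simp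
    qed auto
    then obtain C where C: "\<And>x. x \<in> {0..a} \<Longrightarrow> u x * u x = C" by auto
    have "C = 0" using C[of 0] u0 a by simp
    then have "\<And>x. x \<in> {0..a} \<Longrightarrow> u x = 0" using C by simp
    then show False using nz by auto
  qed
  define k where "k = sqrt lam"
  have kpos: "k > 0" and lk: "lam = k^2" unfolding k_def using lpos by auto
  define \<phi> where "\<phi> x = cos (k * x) + (\<alpha> / k) * sin (k * x)" for x
  define \<phi>' where "\<phi>' x = - k * sin (k * x) + \<alpha> * cos (k * x)" for x
  have dphi: "(\<phi> has_real_derivative \<phi>' x) (at x within {0..a})" for x
    unfolding \<phi>_def \<phi>'_def using kpos
    by (auto intro!: derivative_eq_intros simp: algebra_simps)
  have dphi': "(\<phi>' has_real_derivative (- lam * \<phi> x)) (at x within {0..a})" for x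
  proof -
    have "(\<phi>' has_real_derivative (- k * (cos (k * x) * k) + \<alpha> * (- sin (k * x) * k))) (at x within {0..a})"
      unfolding \<phi>'_def by (auto intro!: derivative_eq_intros)
    moreover have "- k * (cos (k * x) * k) + \<alpha> * (- sin (k * x) * k) = - lam * \<phi> x"
      unfolding \<phi>_def lk using kpos by (simp add: field_simps power2_eq_square)
    ultimately show ?thesis by simp
  qed
  define D where "D x = u x - u 0 * \<phi> x" for x
  define D' where "D' x = u' x - u 0 * \<phi>' x" for x
  define E where "E x = D' x * D' x + lam * (D x * D x)" for x
  have "\<exists>C. \<forall>x\<in>{0..a}. E x = C"
  proof (rule has_field_derivative_zero_constant)
    fix x assume x: "x \<in> {0..a}"
    have "(D has_real_derivative D' x) (at x within {0..a})"
      unfolding D_def D'_def using du[OF x] dphi[of x] by (auto intro!: derivative_eq_intros)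
    moreover have "(D' has_real_derivative (- lam * D x)) (at x within {0..a})"
    proof -
      have "(D' has_real_derivative (- lam * u x - u 0 * (- lam * \<phi> x))) (at x within {0..a})"
        unfolding D'_def using du'[OF x] dphi'[of x] by (auto intro!: derivative_eq_intros)
      then show ?thesis unfolding D_def by (simp add: algebra_simps)
    qed
    ultimately have "(E has_real_derivative
        ((- lam * D x) * D' x + D' x * (- lam * D x) + lam * (D' x * D x + D x * D' x))) (at x within {0..a})"
      unfolding E_def by (auto intro!: derivative_eq_intros)
    then show "(E has_real_derivative 0) (at x within {0..a})" by (simp add: algebra_simps)
  qed auto
  then obtain C where C: "\<And>x. x \<in> {0..a} \<Longrightarrow> E x = C" by auto
  have "E 0 = 0" unfolding E_def D_def D'_def \<phi>_def \<phi>'_def using b0 by (simp add: algebra_simps)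
  then have E0: "\<And>x. x \<in> {0..a} \<Longrightarrow> E x = 0" using C[of 0] C a by auto
  have DD: "D x = 0 \<and> D' x = 0" if "x \<in> {0..a}" for x
  proof -
    have "D' x * D' x + lam * (D x * D x) = 0" using E0[OF that] unfolding E_def .
    moreover have "D' x * D' x \<ge> 0" "lam * (D x * D x) \<ge> 0" using lpos by auto
    ultimately have "D' x * D' x = 0" "lam * (D x * D x) = 0" by linarith+
    then show ?thesis using lpos by auto
  qed
  have u00: "u 0 \<noteq> 0"
  proof
    assume "u 0 = 0"
    then have "u x = 0" if "x \<in> {0..a}" for x using DD[OF that] unfolding D_def by simp
    then show False using nz by auto
  qed
  have "u a = u 0 * \<phi> a" "u' a = u 0 * \<phi>' a" using DD[of a] a unfolding D_def D'_def by auto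
  then have "u 0 * (\<phi>' a + \<alpha> * \<phi> a) = 0" using ba by (simp add: algebra_simps)
  then have phia: "\<phi>' a + \<alpha> * \<phi> a = 0" using u00 by simp
  define th where "th = k * a / 2"
  have ka: "k * a = 2 * th" unfolding th_def by simp
  have "k * (\<phi>' a + \<alpha> * \<phi> a) = 2 * ((\<alpha> * cos th - k * sin th) * (k * cos th + \<alpha> * sin th))"
    unfolding \<phi>_def \<phi>'_def ka sin_double cos_double using kpos
    by (simp add: field_simps power2_eq_square)
  then have "(\<alpha> * cos th - k * sin th) * (k * cos th + \<alpha> * sin th) = 0" using phia by simp
  then show ?thesis using lpos unfolding Let_def th_def k_def by simp
qed


lemma eig_lower:
  assumes a: "a > 0" and al: "\<alpha> > 0" and ev: "robin_eigenvalue a \<alpha> lam"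
  shows "2 * \<alpha> * pi^2 / (a * (pi^2 + 2 * \<alpha> * a)) \<le> lam"
proof -
  define k where "k = sqrt lam"
  define th where "th = k * a / 2"
  have lpos: "lam > 0" and prod: "(\<alpha> * cos th - k * sin th) * (k * cos th + \<alpha> * sin th) = 0"
    using eig_data[OF a al ev] unfolding Let_def th_def k_def by auto
  have kpos: "k > 0" and lk: "lam = k^2" unfolding k_def using lpos by auto
  have thpos: "th > 0" unfolding th_def using kpos a by simp
  have Lle: "2 * \<alpha> * pi^2 / (a * (pi^2 + 2 * \<alpha> * a)) \<le> pi^2 / a^2"
  proof -
    have "2 * \<alpha> * pi^2 / (a * (pi^2 + 2 * \<alpha> * a)) \<le> 2 * \<alpha> * pi^2 / (a * (2 * \<alpha> * a))"
      using a al by (intro divide_left_mono mult_left_mono mult_pos_pos add_pos_pos) auto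
    also have "\<dots> = pi^2 / a^2" using a al by (simp add: field_simps power2_eq_square)
    finally show ?thesis .
  qed
  show ?thesis
  proof (cases "th \<ge> pi/2")
    case True
    have "pi / a \<le> k"
    proof -
      have "k = 2 * th / a" unfolding th_def using a by simp
      then show ?thesis using True a by (simp add: field_simps)
    qed
    then have "(pi/a)^2 \<le> k^2" by (rule power_mono) (use a in simp)
    then have "pi^2/a^2 \<le> lam" unfolding lk by (simp add: power_divide)
    then show ?thesis using Lle by linarith
  next
    case False
    then have th2: "th < pi/2" by simp
    have s: "sin th > 0" using thpos th2 by (intro sin_gt_zero) auto
    have c: "cos th > 0" using thpos th2 by (intro cos_gt_zero_pi) auto
    have "k * cos th + \<alpha> * sin th > 0" using s c kpos al by (simp add: add_pos_pos)
    then have hac: "\<alpha> * cos th = k * sin th" using prod by simp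
    have I: "(pi^2 - 4 * th^2) * sin th \<le> pi^2 * th * cos th"
      using ineq_I[of th] thpos th2 by simp
    have "cos th * (k^2 * (a * (pi^2 + 2 * \<alpha> * a)) - 2 * \<alpha> * pi^2)
        = k^2 * a * pi^2 * cos th + 2 * a^2 * k^2 * (\<alpha> * cos th) - 2 * pi^2 * (\<alpha> * cos th)"
      by (simp add: algebra_simps power2_eq_square)
    also have "\<dots> = k^2 * a * pi^2 * cos th + 2 * a^2 * k^2 * (k * sin th) - 2 * pi^2 * (k * sin th)"
      unfolding hac ..
    also have "\<dots> = 2 * k * (pi^2 * th * cos th - (pi^2 - 4 * th^2) * sin th)"
      unfolding th_def by (simp add: field_simps power2_eq_square)
    also have "\<dots> \<ge> 0" using I kpos by simp
    finally have "cos th * (k^2 * (a * (pi^2 + 2 * \<alpha> * a)) - 2 * \<alpha> * pi^2) \<ge> 0" .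
    then have "k^2 * (a * (pi^2 + 2 * \<alpha> * a)) - 2 * \<alpha> * pi^2 \<ge> 0"
      using c by (simp add: zero_le_mult_iff)
    moreover have "a * (pi^2 + 2 * \<alpha> * a) > 0" using a al by (simp add: add_pos_pos)
    ultimately show ?thesis unfolding lk by (simp add: pos_divide_le_eq)
  qed
qed

lemma eig_exists:
  assumes a: "a > 0" and al: "\<alpha> > 0"
  shows "\<exists>lam. robin_eigenvalue a \<alpha> lam \<and> lam \<le> pi^2 / a^2 *
           ((pi^2 + 2 * a * \<alpha> - sqrt (64 * a * \<alpha> + (pi^2 - 2 * a * \<alpha>)^2)) / (2 * (pi^2 - 8)))"
proof -
  define f where "f k = k * sin (k * a / 2) - \<alpha> * cos (k * a / 2)" for k
  have cont: "continuous_on {0..pi/a} f" unfolding f_def by (auto intro!: continuous_intros)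
  have f0: "f 0 = - \<alpha>" unfolding f_def by simp
  have fpi: "f (pi/a) = pi/a" unfolding f_def using a by simp
  obtain k where k0: "0 \<le> k" and k1: "k \<le> pi/a" and fk: "f k = 0"
    using IVT'[of f 0 0 "pi/a", OF _ _ _ cont] f0 fpi a al by auto
  have kne0: "k \<noteq> 0" using fk f0 al by auto
  have knepi: "k \<noteq> pi/a" using fk fpi a by auto
  have kpos: "k > 0" using k0 kne0 by simp
  define th where "th = k * a / 2"
  have thpos: "th > 0" unfolding th_def using kpos a by simp
  have th2: "th < pi/2"
  proof -
    have "k < pi/a" using k1 knepi by simp
    then have "k * a < pi" using a by (simp add: field_simps)
    then show ?thesis unfolding th_def by simp
  qed
  have s: "sin th > 0" using thpos th2 by (intro sin_gt_zero) auto
  have c: "cos th > 0" using thpos th2 by (intro cos_gt_zero_pi) auto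
  have hac: "\<alpha> * cos th = k * sin th" using fk unfolding f_def th_def by simp
  define u where "u x = cos (k * (x - a/2))" for x
  define u' where "u' x = - k * sin (k * (x - a/2))" for x
  have ev: "robin_eigenvalue a \<alpha> (k^2)"
    unfolding robin_eigenvalue_def
  proof (intro exI conjI ballI)
    fix x :: real
    have "(u has_real_derivative u' x) (at x)"
      unfolding u_def u'_def by (auto intro!: derivative_eq_intros simp: algebra_simps)
    then show "(u has_real_derivative u' x) (at x within {0..a})"
      by (rule has_field_derivative_at_within)
    have "(u' has_real_derivative (- (k^2) * u x)) (at x)"
      unfolding u_def u'_def by (auto intro!: derivative_eq_intros simp: algebra_simps power2_eq_square)
    then show "(u' has_real_derivative (- (k^2) * u x)) (at x within {0..a})"
      by (rule has_field_derivative_at_within)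
  next
    show "\<exists>x\<in>{0..a}. u x \<noteq> 0" using a by (intro bexI[of _ "a/2"]) (auto simp: u_def)
  next
    have e0: "k * (0 - a/2) = - th" and ea: "k * (a - a/2) = th" unfolding th_def by (simp_all add: algebra_simps)
    show "- u' 0 + \<alpha> * u 0 = 0" unfolding u_def u'_def e0 using hac by simp
    show "u' a + \<alpha> * u a = 0" unfolding u_def u'_def ea using hac by simp
  qed
  define cc where "cc = 4 * (pi^2 - 8) / pi^2"
  define C where "C = pi^2 - 8"
  define \<beta> where "\<beta> = 2 * a * \<alpha>"
  define sv where "sv = 4 * th^2 / pi^2"
  have pi2: "pi^2 > 9.85" "pi^2 < 9.87" using pi_sq_bounds by auto
  have Cpos: "C > 0" "C < 8" unfolding C_def using pi2 by auto
  have II: "cos th * (pi^2 * th - cc * th^3) \<le> sin th * (pi^2 - 4 * th^2)"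
    using ineq_II[of th] thpos th2 unfolding cc_def by simp
  have bc: "\<beta> * cos th = 4 * th * sin th"
  proof -
    have "\<beta> * cos th = 2 * a * (\<alpha> * cos th)" unfolding \<beta>_def by simp
    also have "\<dots> = 2 * a * (k * sin th)" unfolding hac ..
    also have "\<dots> = 4 * th * sin th" unfolding th_def by simp
    finally show ?thesis .
  qed
  have "cos th * (\<beta> * (1 - sv) - sv * (pi^2 - C * sv))
      = (\<beta> * cos th) * (1 - sv) - cos th * sv * (pi^2 - C * sv)" by (simp add: algebra_simps)
  also have "\<dots> = (4 * th * sin th) * (1 - sv) - cos th * sv * (pi^2 - C * sv)" unfolding bc ..
  also have "\<dots> = (4 * th / pi^2) * (sin th * (pi^2 - 4 * th^2) - cos th * (pi^2 * th - cc * th^3))"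
    unfolding sv_def cc_def C_def by (simp add: field_simps power2_eq_square power3_eq_cube)
  also have "\<dots> \<ge> 0" using II thpos by (intro mult_nonneg_nonneg) auto
  finally have "cos th * (\<beta> * (1 - sv) - sv * (pi^2 - C * sv)) \<ge> 0" .
  then have q: "\<beta> * (1 - sv) - sv * (pi^2 - C * sv) \<ge> 0" using c by (simp add: zero_le_mult_iff)
  have sv1: "sv \<le> 1"
  proof -
    have "th^2 \<le> (pi/2)^2" using thpos th2 by (intro power_mono) auto
    then show ?thesis unfolding sv_def by (simp add: power_divide)
  qed
  have sv0: "sv \<ge> 0" unfolding sv_def by simp
  define R where "R = pi^2 + \<beta> - 2 * C * sv"
  have "2 * C * sv \<le> 2 * C" using sv1 Cpos mult_left_mono[of sv 1 "2 * C"] by simp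
  moreover have "\<beta> > 0" unfolding \<beta>_def using a al by simp
  moreover have "C = pi^2 - 8" unfolding C_def ..
  ultimately have R0: "R \<ge> 0" unfolding R_def using pi2 Cpos by linarith
  define D where "D = 64 * a * \<alpha> + (pi^2 - 2 * a * \<alpha>)^2"
  have "R^2 - D = 4 * C * (\<beta> * (1 - sv) - sv * (pi^2 - C * sv))"
    unfolding R_def D_def \<beta>_def C_def by (simp add: algebra_simps power2_eq_square)
  also have "\<dots> \<ge> 0" using q Cpos by simp
  finally have "D \<le> R^2" by simp
  then have "sqrt D \<le> sqrt (R^2)" by (rule real_sqrt_le_mono)
  then have sD: "sqrt D \<le> R" using R0 by simp
  have "sv \<le> (pi^2 + 2 * a * \<alpha> - sqrt D) / (2 * (pi^2 - 8))"
  proof -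
    have "2 * C * sv \<le> pi^2 + 2 * a * \<alpha> - sqrt D" using sD unfolding R_def \<beta>_def by simp
    then show ?thesis using Cpos unfolding C_def by (simp add: pos_le_divide_eq algebra_simps)
  qed
  then have "pi^2 / a^2 * sv \<le> pi^2 / a^2 * ((pi^2 + 2 * a * \<alpha> - sqrt D) / (2 * (pi^2 - 8)))"
    by (rule mult_left_mono) simp
  moreover have "pi^2 / a^2 * sv = k^2" unfolding sv_def th_def using a
    by (simp add: field_simps power2_eq_square)
  ultimately show ?thesis using ev unfolding D_def by auto
qed

theorem propositionA1:
  fixes a \<alpha> :: real
  assumes "a > 0" and "\<alpha> > 0"
  shows "2 * \<alpha> * pi^2 / (a * (pi^2 + 2 * \<alpha> * a)) \<le> robin_lambda1 a \<alpha> \<and>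
         robin_lambda1 a \<alpha> \<le> pi^2 / a^2 *
           ((pi^2 + 2 * a * \<alpha> - sqrt (64 * a * \<alpha> + (pi^2 - 2 * a * \<alpha>)^2)) / (2 * (pi^2 - 8)))"
proof -
  let ?S = "{lam. robin_eigenvalue a \<alpha> lam}"
  obtain mu where mu: "robin_eigenvalue a \<alpha> mu" and mub: "mu \<le> pi^2 / a^2 *
           ((pi^2 + 2 * a * \<alpha> - sqrt (64 * a * \<alpha> + (pi^2 - 2 * a * \<alpha>)^2)) / (2 * (pi^2 - 8)))"
    using eig_exists[OF assms] by blast
  have low: "\<And>lam. lam \<in> ?S \<Longrightarrow> 2 * \<alpha> * pi^2 / (a * (pi^2 + 2 * \<alpha> * a)) \<le> lam"
    using eig_lower[OF assms] by blast
  have ne: "?S \<noteq> {}" using mu by blast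
  have bdd: "bdd_below ?S" unfolding bdd_below_def using low by blast
  have "2 * \<alpha> * pi^2 / (a * (pi^2 + 2 * \<alpha> * a)) \<le> Inf ?S"
    by (rule cInf_greatest[OF ne low])
  moreover have "Inf ?S \<le> mu" using mu bdd by (intro cInf_lower) auto
  ultimately show ?thesis using mub unfolding robin_lambda1_def by linarith
qed

end
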